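(* For given positive integers $N_s$ ($s\in\mathcal S$) and $N=\sum_s N_s$, let $M_s=\lfloor N/N_s\rfloor$ and $r_s=N\bmod N_s$. Consider an sAEDS with $|\mathcal X_s|=N_s$ in which, for each $s$, exactly $N_s-r_s$ states $x\in\mathcal X_s$ have $|\mathcal F^+_x|=M_s$ and the other $r_s$ have $|\mathcal F^+_x|=M_s+1$, and, for a stationary distribution $Q$ of its state chain, each $\mathcal F^+_x$ is encoded by a phased-in code (with $|\mathcal F^+_x|$ codewords) matched to $Q$ restricted to $\mathcal F^+_x$. Then $$L\le H(p)+D(p\|q)+\sigma+\sum_{s\in\mathcal S}p(s)\lg\frac{M_s+\tilde Q_{M_s+1}}{N/N_s},$$ where $\sigma=\lg\lg e+1-\lg e$ and $\tilde Q_{M_s+1}=\sum_{x\in\mathcal X_s,\ |\mathcal F^+_x|=M_s+1}\tilde Q_s(x)$.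
   Context: Let $\mathcal S$ be a finite alphabet with $|\mathcal S|\ge 2$ and $p=\{p(s)\}$ a probability distribution with $p(s)>0$ for all $s$ (i.i.d. source). $\mathcal B=\{0,1\}^*$ (including the empty word), $l(\beta)$ the word length, $\lg=\log_2$. An AEDS with finite state set $\mathcal X$, $|\mathcal X|=N$, consists of maps $E_{\hat x}:\mathcal S\to\mathcal B$ and $F^-_{\hat x}:\mathcal S\to\mathcal X$ ($\hat x\in\mathcal X$) such that for every $x\in\mathcal X$ the words $E_{\hat x}(s)$ over all pairs $(\hat x,s)$ with $F^-_{\hat x}(s)=x$ are pairwise distinct and form a prefix-free set. The state chain is the Markov chain on $\mathcal X$ moving from $\hat x$ to $F^-_{\hat x}(s)$ with probability $p(s)$; for a stationary distribution $Q$ the average code length is $L=\sum_{\hat x}\sum_s p(s)Q(\hat x)l(E_{\hat x}(s))$. A state-divided AEDS (sAEDS) is an AEDS for which the sets $\mathcal X_s=\{F^-_{\hat x}(s):\hat x\in\mathcal X\}$ are pairwise disjoint with union $\mathcal X$; $N_s=|\mathcal X_s|$, $q(s)=N_s/N$. For $x\in\mathcal X_s$, $\mathcal F^+_x=\{\hat x: F^-_{\hat x}(s)=x\}$; for each $s$ these sets partition $\mathcal X$. An sAEDS is thus specified by the partitions and, for each $x\in\mathcal X_s$, an injective prefix-free code $\hat x\mapsto E_{\hat x}(s)$ on $\mathcal F^+_x$; the state chain (hence $Q$) depends only on $p$ and the partitions. For $x\in\mathcal X_s$, $\tilde Q_s(x)=\sum_{\hat x\in\mathcal F^+_x}Q(\hat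 x)$. Phased-in code: for an integer $M\ge1$ and $k=\lceil\lg M\rceil$, a prefix-free code on an $M$-element set with $2^k-M$ codewords of length $k-1$ and $2M-2^k$ codewords of length $k$ (for $M=1$, the single empty word). It is matched to a distribution on that set if the length-$(k-1)$ codewords go to $2^k-M$ elements of largest probability. $H(p)=-\sum_s p(s)\lg p(s)$, $D(p\|q)=\sum_s p(s)\lg(p(s)/q(s))$. *)

theory Defs
  imports Complex_Main "HOL-Library.Sublist"
begin

definition prefix_free :: "bool list set \<Rightarrow> bool" where
  "prefix_free W \<longleftrightarrow> (\<forall>a\<in>W. \<forall>b\<in>W. a \<noteq> b \<longrightarrow> \<not> prefix a b)"

text \<open>AEDS with encoding maps \<open>E x' s\<close> and transitions \<open>F x' s\<close> (= F-minus).\<close>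
definition is_AEDS :: "('x::finite \<Rightarrow> 's::finite \<Rightarrow> bool list) \<Rightarrow> ('x \<Rightarrow> 's \<Rightarrow> 'x) \<Rightarrow> bool" where
  "is_AEDS E F \<longleftrightarrow> (\<forall>x. inj_on (\<lambda>(x', s). E x' s) {(x', s). F x' s = x}
      \<and> prefix_free ((\<lambda>(x', s). E x' s) ` {(x', s). F x' s = x}))"

definition Xs :: "('x \<Rightarrow> 's \<Rightarrow> 'x) \<Rightarrow> 's \<Rightarrow> 'x set" where
  "Xs F s = range (\<lambda>x'. F x' s)"

definition is_sAEDS :: "('x::finite \<Rightarrow> 's::finite \<Rightarrow> bool list) \<Rightarrow> ('x \<Rightarrow> 's \<Rightarrow> 'x) \<Rightarrow> bool" where
  "is_sAEDS E F \<longleftrightarrow> is_AEDS E F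
     \<and> (\<forall>s t. s \<noteq> t \<longrightarrow> Xs F s \<inter> Xs F t = {})
     \<and> (\<Union>s. Xs F s) = UNIV"

definition Fplus :: "('x \<Rightarrow> 's \<Rightarrow> 'x) \<Rightarrow> 's \<Rightarrow> 'x \<Rightarrow> 'x set" where
  "Fplus F s x = {x'. F x' s = x}"

definition stationary :: "('s::finite \<Rightarrow> real) \<Rightarrow> ('x::finite \<Rightarrow> 's \<Rightarrow> 'x) \<Rightarrow> ('x \<Rightarrow> real) \<Rightarrow> bool" where
  "stationary p F Q \<longleftrightarrow> (\<forall>x. Q x \<ge> 0) \<and> (\<Sum>x\<in>UNIV. Q x) = 1
     \<and> (\<forall>y. Q y = (\<Sum>x'\<in>UNIV. \<Sum>s\<in>{s. F x' s = y}. Q x' * p s))"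

definition avg_len :: "('s::finite \<Rightarrow> real) \<Rightarrow> ('x::finite \<Rightarrow> real) \<Rightarrow> ('x \<Rightarrow> 's \<Rightarrow> bool list) \<Rightarrow> real" where
  "avg_len p Q E = (\<Sum>x'\<in>UNIV. \<Sum>s\<in>UNIV. p s * Q x' * real (length (E x' s)))"

definition phased_in :: "'a set \<Rightarrow> ('a \<Rightarrow> bool list) \<Rightarrow> bool" where
  "phased_in A c \<longleftrightarrow> finite A \<and> card A \<ge> 1 \<and> inj_on c A \<and> prefix_free (c ` A) \<and>
    (let M = card A; k = nat \<lceil>log 2 (real M)\<rceil> in
      if M = 1 then (\<forall>a\<in>A. c a = [])
      else (card {a\<in>A. length (c a) = k - 1} = 2 ^ k - M
            \<and> card {a\<in>A. length (c a) = k} = 2 * M - 2 ^ k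
            \<and> (\<forall>a\<in>A. length (c a) = k - 1 \<or> length (c a) = k)))"

definition phased_in_matched :: "'a set \<Rightarrow> ('a \<Rightarrow> bool list) \<Rightarrow> ('a \<Rightarrow> real) \<Rightarrow> bool" where
  "phased_in_matched A c w \<longleftrightarrow> phased_in A c \<and>
     (\<forall>a\<in>A. \<forall>b\<in>A. length (c a) < length (c b) \<longrightarrow> w b \<le> w a)"

definition entropy :: "('s::finite \<Rightarrow> real) \<Rightarrow> real" where
  "entropy p = - (\<Sum>s\<in>UNIV. p s * log 2 (p s))"

definition KL :: "('s::finite \<Rightarrow> real) \<Rightarrow> ('s \<Rightarrow> real) \<Rightarrow> real" where
  "KL p q = (\<Sum>s\<in>UNIV. p s * log 2 (p s / q s))"

end

theory Submission imports Defs begin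

definition sig :: real where "sig = log 2 (log 2 (exp 1)) + 1 - log 2 (exp 1)"

lemma sigma_bound:
  fixes M t :: real assumes M: "M > 0"
  shows "t + 1 - 2 powr t / M \<le> log 2 M + sig"
proof -
  define L where "L = ln (2::real)"
  have L: "L > 0" unfolding L_def by simp
  define z where "z = 2 powr t / M * L"
  have z: "z > 0" using M L by (simp add: z_def)
  have lnz: "ln z = t * L - ln M + ln L"
    using M L by (simp add: z_def ln_mult ln_div L_def ln_powr)
  have "ln z \<le> z - 1" using z by (rule ln_le_minus_one)
  hence *: "t * L - ln M + ln L \<le> 2 powr t / M * L - 1" using lnz z_def by simp
  have e: "log 2 (exp 1) = 1 / L" by (simp add: log_def L_def)
  have ll: "log 2 (1 / L) = - ln L / L" using L by (simp add: log_def L_def ln_div)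
  have lM: "log 2 M = ln M / L" by (simp add: log_def L_def)
  have r1: "(t + 1 - 2 powr t / M) * L = t * L + L - 2 powr t / M * L" by (simp add: algebra_simps)
  have r2: "(log 2 M + sig) * L = ln M - ln L + L - 1"
    unfolding sig_def e ll lM using L by (simp add: algebra_simps)
  have "(t + 1 - 2 powr t / M) * L \<le> (log 2 M + sig) * L"
    unfolding r1 r2 using * by linarith
  thus ?thesis using L by simp
qed

lemma jensen_lg:
  fixes w a :: "'i \<Rightarrow> real"
  assumes fin: "finite I" and w: "\<And>i. i \<in> I \<Longrightarrow> w i \<ge> 0" and ws: "(\<Sum>i\<in>I. w i) = 1"
    and a: "\<And>i. i \<in> I \<Longrightarrow> a i > 0"
  shows "(\<Sum>i\<in>I. w i * log 2 (a i)) \<le> log 2 (\<Sum>i\<in>I. w i * a i)"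
proof -
  define A where "A = (\<Sum>i\<in>I. w i * a i)"
  have A0: "A \<ge> 0" unfolding A_def using w a by (intro sum_nonneg) (simp add: less_imp_le)
  have "A \<noteq> 0"
  proof
    assume "A = 0"
    hence "\<forall>i\<in>I. w i * a i = 0" unfolding A_def using fin w a
      by (subst sum_nonneg_eq_0_iff[symmetric]) (auto simp: less_imp_le)
    hence "\<forall>i\<in>I. w i = 0" using a by fastforce
    hence "(\<Sum>i\<in>I. w i) = 0" by simp
    thus False using ws by simp
  qed
  hence A: "A > 0" using A0 by simp
  have L: "ln (2::real) > 0" by simp
  have each: "w i * log 2 (a i) \<le> w i * log 2 A + w i * (a i / A - 1) / ln 2" if i: "i \<in> I" for i
  proof -
    have "ln (a i / A) \<le> a i / A - 1" using a[OF i] A by (intro ln_le_minus_one) simp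
    hence "ln (a i) - ln A \<le> a i / A - 1" using a[OF i] A by (simp add: ln_div)
    hence "log 2 (a i) \<le> log 2 A + (a i / A - 1) / ln 2"
      using L by (simp add: log_def field_simps)
    from mult_left_mono[OF this w[OF i]] show ?thesis by (simp add: algebra_simps)
  qed
  have "(\<Sum>i\<in>I. w i * log 2 (a i)) \<le> (\<Sum>i\<in>I. w i * log 2 A + w i * (a i / A - 1) / ln 2)"
    by (rule sum_mono) (rule each)
  also have "\<dots> = log 2 A + ((\<Sum>i\<in>I. w i * a i) / A - (\<Sum>i\<in>I. w i)) / ln 2"
    by (simp add: sum.distrib sum_distrib_right[symmetric] sum_divide_distrib[symmetric]
        right_diff_distrib sum_subtractf ws algebra_simps)
  also have "\<dots> = log 2 A" using A ws unfolding A_def by simp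
  finally show ?thesis unfolding A_def .
qed

lemma sig_nonneg: "sig \<ge> 0"
  using sigma_bound[of 1 0] by simp

lemma phased_bound:
  fixes A :: "'a set" and c :: "'a \<Rightarrow> bool list" and w :: "'a \<Rightarrow> real"
  assumes pm: "phased_in_matched A c w" and w: "\<And>a. a \<in> A \<Longrightarrow> w a \<ge> 0"
  shows "(\<Sum>a\<in>A. w a * real (length (c a))) \<le> (\<Sum>a\<in>A. w a) * (log 2 (real (card A)) + sig)"
proof -
  have fin: "finite A" and M1: "card A \<ge> 1" and ph: "phased_in A c"
    using pm by (auto simp: phased_in_matched_def phased_in_def)
  have mt: "\<And>a b. a \<in> A \<Longrightarrow> b \<in> A \<Longrightarrow> length (c a) < length (c b) \<Longrightarrow> w b \<le> w a"
    using pm by (auto simp: phased_in_matched_def)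
  define W where "W = (\<Sum>a\<in>A. w a)"
  have W0: "W \<ge> 0" unfolding W_def using w by (simp add: sum_nonneg)
  define M where "M = card A"
  define k where "k = nat \<lceil>log 2 (real M)\<rceil>"
  show ?thesis
  proof (cases "M = 1")
    case True
    hence "\<forall>a\<in>A. c a = []" using ph unfolding phased_in_def M_def by (simp add: Let_def)
    hence "(\<Sum>a\<in>A. w a * real (length (c a))) = 0" by simp
    moreover have "(\<Sum>a\<in>A. w a) * (log 2 (real (card A)) + sig) \<ge> 0"
      using True W0 sig_nonneg unfolding W_def M_def by simp
    ultimately show ?thesis by linarith
  next
    case False
    hence M2: "M \<ge> 2" using M1 M_def by simp
    have props: "card {a\<in>A. length (c a) = k - 1} = 2 ^ k - M"
        "card {a\<in>A. length (c a) = k} = 2 * M - 2 ^ k"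
        "\<forall>a\<in>A. length (c a) = k - 1 \<or> length (c a) = k"
      using ph False unfolding phased_in_def M_def k_def by (simp_all add: Let_def)
    have "log 2 (real M) > 0" using M2 by simp
    hence k1: "k \<ge> 1" unfolding k_def by linarith
    define S where "S = {a\<in>A. length (c a) = k - 1}"
    define B where "B = {a\<in>A. length (c a) = k}"
    have AB: "A - S = B" unfolding S_def B_def using props(3) k1 by auto
    have SA: "S \<subseteq> A" unfolding S_def by auto
    have cards: "card S + card B = M"
      unfolding M_def AB[symmetric] using fin SA by (metis card_Diff_subset card_mono finite_subset le_add_diff_inverse)
    have cS: "card S = 2 ^ k - M" and cB: "card B = 2 * M - 2 ^ k"
      using props unfolding S_def B_def by auto
    have Mk: "M \<le> 2 ^ k" using cards cS cB by linarith
    have cSr: "real (card S) = 2 ^ k - real M" using Mk cS by (simp add: of_nat_diff)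
    define WS where "WS = (\<Sum>a\<in>S. w a)"
    define WB where "WB = (\<Sum>a\<in>B. w a)"
    have finS: "finite S" and finB: "finite B" using fin SA AB finite_subset by auto
    have WW: "W = WS + WB" unfolding W_def WS_def WB_def using sum.subset_diff[OF SA fin, of w] AB by simp
    have lenS: "\<And>a. a \<in> S \<Longrightarrow> length (c a) = k - 1" unfolding S_def by auto
    have lenB: "\<And>a. a \<in> B \<Longrightarrow> length (c a) = k" unfolding B_def by auto
    have dbl: "(\<Sum>a\<in>S. \<Sum>b\<in>B. w b) \<le> (\<Sum>a\<in>S. \<Sum>b\<in>B. w a)"
    proof (intro sum_mono)
      fix a b assume a: "a \<in> S" and b: "b \<in> B"
      show "w b \<le> w a" using mt[of a b] a b lenS lenB k1 SA AB by force
    qed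
    hence key: "real (card S) * WB \<le> real (card B) * WS"
      unfolding WS_def WB_def by (simp add: sum_distrib_left)
    have "real M * WS = real (card S) * WS + real (card B) * WS"
      using cards by (metis distrib_right of_nat_add)
    also have "\<dots> \<ge> real (card S) * W" using key WW by (simp add: algebra_simps)
    finally have WSb: "WS \<ge> real (card S) * W / real M" using M2
      by (simp add: field_simps)
    have "(\<Sum>a\<in>A. w a * real (length (c a))) = (\<Sum>a\<in>S. w a * real (length (c a))) + (\<Sum>a\<in>B. w a * real (length (c a)))"
      using sum.subset_diff[OF SA fin, of "\<lambda>a. w a * real (length (c a))"] AB by simp
    also have "\<dots> = (\<Sum>a\<in>S. w a * (real k - 1)) + (\<Sum>a\<in>B. w a * real k)"
      using lenS lenB k1 by (simp add: of_nat_diff)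
    also have "\<dots> = real k * W - WS" unfolding WW WS_def WB_def
      by (simp add: sum_distrib_left right_diff_distrib sum_subtractf algebra_simps)
    also have "\<dots> \<le> real k * W - real (card S) * W / real M" using WSb by linarith
    also have "\<dots> = W * (real k + 1 - 2 powr (real k) / real M)"
      unfolding cSr using M2 by (simp add: field_simps powr_realpow)
    also have "\<dots> \<le> W * (log 2 (real M) + sig)"
      using sigma_bound[of "real M" "real k"] M2 W0 by (intro mult_left_mono) auto
    finally show ?thesis unfolding W_def M_def .
  qed
qed

theorem theorem5:
  fixes p :: "'s::finite \<Rightarrow> real"
    and E :: "'x::finite \<Rightarrow> 's \<Rightarrow> bool list"
    and F :: "'x \<Rightarrow> 's \<Rightarrow> 'x"
    and Q :: "'x \<Rightarrow> real"
  assumes card_S: "card (UNIV :: 's set) \<ge> 2"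
    and p_pos: "\<forall>s. p s > 0"
    and p_sum: "(\<Sum>s\<in>UNIV. p s) = 1"
    and sAEDS: "is_sAEDS E F"
    and balanced: "\<forall>s. card {x\<in>Xs F s. card (Fplus F s x) = card (UNIV :: 'x set) div card (Xs F s)}
                         = card (Xs F s) - card (UNIV :: 'x set) mod card (Xs F s)
                      \<and> card {x\<in>Xs F s. card (Fplus F s x) = card (UNIV :: 'x set) div card (Xs F s) + 1}
                         = card (UNIV :: 'x set) mod card (Xs F s)"
    and stat: "stationary p F Q"
    and codes: "\<forall>s. \<forall>x\<in>Xs F s. phased_in_matched (Fplus F s x) (\<lambda>x'. E x' s) Q"
  shows "avg_len p Q E \<le>
     entropy p + KL p (\<lambda>s. real (card (Xs F s)) / real (card (UNIV :: 'x set)))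
     + (log 2 (log 2 (exp 1)) + 1 - log 2 (exp 1))
     + (\<Sum>s\<in>UNIV. p s * log 2
          ((real (card (UNIV :: 'x set) div card (Xs F s))
            + (\<Sum>x\<in>{x\<in>Xs F s. card (Fplus F s x) = card (UNIV :: 'x set) div card (Xs F s) + 1}.
                 \<Sum>x'\<in>Fplus F s x. Q x'))
           / (real (card (UNIV :: 'x set)) / real (card (Xs F s)))))"
proof -
  define N where "N = card (UNIV :: 'x set)"
  have Q0: "\<And>x. Q x \<ge> 0" and Q1: "(\<Sum>x\<in>UNIV. Q x) = 1" using stat unfolding stationary_def by blast+
  define Qt where "Qt s x = (\<Sum>x'\<in>Fplus F s x. Q x')" for s x
  define A where "A s = real (N div card (Xs F s)) + (\<Sum>x\<in>{x\<in>Xs F s. card (Fplus F s x) = N div card (Xs F s) + 1}. Qt s x)" for s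
  have grp: "(\<Sum>x\<in>Xs F s. \<Sum>x'\<in>Fplus F s x. g x') = (\<Sum>x'\<in>UNIV. g x')" for s and g :: "'x \<Rightarrow> real"
    using sum.group[of "UNIV :: 'x set" "Xs F s" "\<lambda>x'. F x' s" g] by (simp add: Xs_def Fplus_def)
  have inner: "(\<Sum>x'\<in>UNIV. Q x' * real (length (E x' s))) \<le> sig + log 2 (A s)" for s
  proof -
    define Ns where "Ns = card (Xs F s)"
    define m where "m = N div Ns"
    have Xne: "Xs F s \<noteq> {}" by (simp add: Xs_def)
    have Ns0: "Ns > 0" using Xne unfolding Ns_def by (simp add: card_gt_0_iff)
    have NsN: "Ns \<le> N" unfolding Ns_def N_def by (simp add: card_mono)
    have m1: "m \<ge> 1" unfolding m_def using NsN Ns0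
      by (metis div_le_mono div_self less_not_refl2)
    define S1 where "S1 = {x\<in>Xs F s. card (Fplus F s x) = m}"
    define S2 where "S2 = {x\<in>Xs F s. card (Fplus F s x) = m + 1}"
    have c1: "card S1 = Ns - N mod Ns" and c2: "card S2 = N mod Ns"
      using balanced unfolding S1_def S2_def m_def Ns_def N_def by auto
    have "N mod Ns < Ns" using Ns0 by simp
    hence "card S1 + card S2 = Ns" using c1 c2 by simp
    moreover have "S1 \<inter> S2 = {}" unfolding S1_def S2_def by auto
    ultimately have "card (S1 \<union> S2) = Ns" by (simp add: card_Un_disjoint)
    moreover have "S1 \<union> S2 \<subseteq> Xs F s" unfolding S1_def S2_def by auto
    ultimately have "S1 \<union> S2 = Xs F s" unfolding Ns_def by (simp add: card_subset_eq)
    hence Mx: "\<And>x. x \<in> Xs F s \<Longrightarrow> card (Fplus F s x) = m \<or> card (Fplus F s x) = m + 1"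
      unfolding S1_def S2_def by auto
    have Qt0: "\<And>x. Qt s x \<ge> 0" unfolding Qt_def using Q0 by (simp add: sum_nonneg)
    have Qt1: "(\<Sum>x\<in>Xs F s. Qt s x) = 1" unfolding Qt_def grp Q1 ..
    have "(\<Sum>x'\<in>UNIV. Q x' * real (length (E x' s)))
        = (\<Sum>x\<in>Xs F s. \<Sum>x'\<in>Fplus F s x. Q x' * real (length (E x' s)))" by (rule grp[symmetric])
    also have "\<dots> \<le> (\<Sum>x\<in>Xs F s. Qt s x * (log 2 (real (card (Fplus F s x))) + sig))"
      unfolding Qt_def using codes Q0 by (intro sum_mono phased_bound) auto
    also have "\<dots> = (\<Sum>x\<in>Xs F s. Qt s x * log 2 (real (card (Fplus F s x)))) + sig"
      by (simp add: distrib_left sum.distrib sum_distrib_right[symmetric] Qt1)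
    also have "(\<Sum>x\<in>Xs F s. Qt s x * log 2 (real (card (Fplus F s x))))
        \<le> log 2 (\<Sum>x\<in>Xs F s. Qt s x * real (card (Fplus F s x)))"
    proof (rule jensen_lg)
      fix x assume "x \<in> Xs F s"
      hence "card (Fplus F s x) \<ge> 1" using Mx[of x] m1 by auto
      thus "real (card (Fplus F s x)) > 0" by simp
    qed (use Qt0 Qt1 in auto)
    also have "(\<Sum>x\<in>Xs F s. Qt s x * real (card (Fplus F s x)))
        = (\<Sum>x\<in>Xs F s. Qt s x * real m + (if card (Fplus F s x) = m + 1 then Qt s x else 0))"
      using Mx by (intro sum.cong) (auto simp: algebra_simps)
    also have "\<dots> = A s"
      unfolding A_def m_def[symmetric] Ns_def[symmetric] sum.distrib
      by (simp add: sum_distrib_right[symmetric] Qt1 sum.inter_filter)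
    finally show ?thesis by simp
  qed
  have "avg_len p Q E = (\<Sum>s\<in>UNIV. p s * (\<Sum>x'\<in>UNIV. Q x' * real (length (E x' s))))"
    unfolding avg_len_def by (subst sum.swap) (simp add: sum_distrib_left mult.assoc)
  also have "\<dots> \<le> (\<Sum>s\<in>UNIV. p s * (sig + log 2 (A s)))"
    using inner p_pos by (intro sum_mono mult_left_mono) (auto simp: less_imp_le)
  also have "\<dots> = sig + (\<Sum>s\<in>UNIV. p s * log 2 (A s))"
    by (simp add: distrib_left sum.distrib sum_distrib_right[symmetric] p_sum)
  also have "(\<Sum>s\<in>UNIV. p s * log 2 (A s)) = entropy p + KL p (\<lambda>s. real (card (Xs F s)) / real N)
     + (\<Sum>s\<in>UNIV. p s * log 2 (A s / (real N / real (card (Xs F s)))))"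
  proof -
    have "p s * log 2 (A s) = - (p s * log 2 (p s)) + p s * log 2 (p s / (real (card (Xs F s)) / real N))
       + p s * log 2 (A s / (real N / real (card (Xs F s))))" if "s \<in> UNIV" for s
    proof -
      have Ns0: "card (Xs F s) > 0" by (simp add: Xs_def card_gt_0_iff)
      have N0: "N > 0" unfolding N_def by (simp add: finite_UNIV_card_ge_0)
      have NsN: "card (Xs F s) \<le> N" unfolding N_def by (simp add: card_mono)
      have m1: "N div card (Xs F s) \<ge> 1" using NsN Ns0
        by (metis div_le_mono div_self less_not_refl2)
      have QS: "(\<Sum>x\<in>{x\<in>Xs F s. card (Fplus F s x) = N div card (Xs F s) + 1}. Qt s x) \<ge> 0"
        unfolding Qt_def using Q0 by (intro sum_nonneg) auto
      have Apos: "A s > 0" unfolding A_def using m1 QS by (smt (verit) of_nat_le_iff of_nat_1)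
      have pp: "p s > 0" using p_pos by auto
      have Xne: "Xs F s \<noteq> {}" using Ns0 by auto
      show ?thesis using Apos pp Ns0 N0 Xne
        by (simp add: log_divide log_mult algebra_simps)
    qed
    hence "(\<Sum>s\<in>UNIV. p s * log 2 (A s)) = (\<Sum>s\<in>UNIV. - (p s * log 2 (p s)) + p s * log 2 (p s / (real (card (Xs F s)) / real N))
       + p s * log 2 (A s / (real N / real (card (Xs F s)))))" by (rule sum.cong[OF refl])
    thus ?thesis unfolding entropy_def KL_def
        by (simp only: sum.distrib sum_negf)
  qed
  finally have "avg_len p Q E \<le> sig + (entropy p + KL p (\<lambda>s. real (card (Xs F s)) / real N)
     + (\<Sum>s\<in>UNIV. p s * log 2 (A s / (real N / real (card (Xs F s))))))" .
  thus ?thesis unfolding sig_def A_def Qt_def N_def by linarith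
qed

end
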